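(* Let $N\ge2$, $n\ge1$, $\tilde J>0$ and $J_i=\tilde J/N^i$ for $1\le i\le n$, and let $0\le m\le n-1$, $1\le s\le N$ be integers. Then the sequence $\{\mathcal H(h^{(m,s)};\gamma_i)\}_{i=0}^{sN^m}$ is symmetric, i.e. $$\mathcal H\big(h^{(m,s)};\gamma_K\big)=\mathcal H\big(h^{(m,s)};\gamma_{sN^m-K}\big)\qquad\text{for all }0\le K\le sN^m.$$
   Context: Hierarchical lattice $\Lambda_N^n=\{1,\dots,N^n\}$; $k$-blocks are $\{jN^k+1,\dots,(j+1)N^k\}$; $d(a,b)$ is the smallest $k\ge0$ with $a,b$ in a common $k$-block. For a field $h$, $\mathcal H(h;\sigma)=-\frac12\sum_{\{v,w\},v\ne w}J_{d(v,w)}\sigma(v)\sigma(w)-\frac h2\sum_v\sigma(v)$ (unordered pairs). $\gamma_k$ is the configuration with $+1$ exactly on $\{1,\dots,k\}$ ($0\le k\le N^n$). $h^{(m,s)}=\tilde J\big[(1-\frac1N)(n-m)-(s-1)\frac1N\big]$. *)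

theory Defs
  imports Complex_Main
begin

text \<open>Hierarchical lattice: sites 1..N^n. The j-th k-block is {j N^k + 1 .. (j+1) N^k},
  so sites a, b lie in a common k-block iff (a-1) div N^k = (b-1) div N^k.\<close>

definition hdist :: "nat \<Rightarrow> nat \<Rightarrow> nat \<Rightarrow> nat" where
  "hdist N a b = (LEAST k. (a - 1) div N ^ k = (b - 1) div N ^ k)"

text \<open>Hamiltonian with coupling sequence J, field h, configuration sigma;
  the pair sum runs over unordered pairs {v,w}, v \<noteq> w, realised as v < w.\<close>

definition hamiltonian ::
  "nat \<Rightarrow> nat \<Rightarrow> (nat \<Rightarrow> real) \<Rightarrow> real \<Rightarrow> (nat \<Rightarrow> real) \<Rightarrow> real" where
  "hamiltonian N n J h \<sigma> =
     - (1/2) * (\<Sum>(v,w)\<in>{(v,w). v \<in> {1..N^n} \<and> w \<in> {1..N^n} \<and> v < w}.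
                   J (hdist N v w) * \<sigma> v * \<sigma> w)
     - (h / 2) * (\<Sum>v\<in>{1..N^n}. \<sigma> v)"

definition gamma :: "nat \<Rightarrow> nat \<Rightarrow> real" where
  "gamma k = (\<lambda>v. if v \<le> k then 1 else -1)"

definition hfield :: "nat \<Rightarrow> nat \<Rightarrow> real \<Rightarrow> nat \<Rightarrow> nat \<Rightarrow> real" where
  "hfield N n Jt m s = Jt * ((1 - 1 / real N) * (real n - real m) - (real s - 1) * (1 / real N))"

end

theory Submission
  imports Defs
begin

definition same :: "nat \<Rightarrow> nat \<Rightarrow> nat \<Rightarrow> nat \<Rightarrow> bool" where
 "same N j v w \<longleftrightarrow> (v - 1) div N ^ j = (w - 1) div N ^ j"

lemma same_mono:
  assumes "same N j v w" "j \<le> j'"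
  shows "same N j' v w"
proof -
  have e: "N ^ j' = N ^ j * N ^ (j' - j)" using assms(2) by (simp add: power_add[symmetric])
  have "(v-1) div N^j' = ((v-1) div N^j) div N^(j'-j)" by (simp add: e div_mult2_eq)
  moreover have "(w-1) div N^j' = ((w-1) div N^j) div N^(j'-j)" by (simp add: e div_mult2_eq)
  ultimately show ?thesis using assms(1) unfolding same_def by simp
qed

lemma hdist_props:
  assumes "N \<ge> 2" "v \<in> {1..N^n}" "w \<in> {1..N^n}" "v < w"
  shows "1 \<le> hdist N v w" "hdist N v w \<le> n" "\<And>j. same N j v w \<longleftrightarrow> hdist N v w \<le> j"
proof -
  have sn: "same N n v w" using assms by (simp add: same_def div_less)
  have hd: "hdist N v w = (LEAST k. same N k v w)" by (simp add: hdist_def same_def)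
  have s_d: "same N (hdist N v w) v w" unfolding hd by (rule LeastI[of "\<lambda>k. same N k v w", OF sn])
  show "hdist N v w \<le> n" unfolding hd by (rule Least_le[of "\<lambda>k. same N k v w", OF sn])
  show "1 \<le> hdist N v w"
  proof (rule ccontr)
    assume "\<not> 1 \<le> hdist N v w" then have "hdist N v w = 0" by simp
    with s_d have "v - 1 = w - 1" by (simp add: same_def)
    with assms show False by auto
  qed
  show "\<And>j. same N j v w \<longleftrightarrow> hdist N v w \<le> j"
    using same_mono[OF s_d] Least_le[of "\<lambda>k. same N k v w"] hd by metis
qed

definition cc :: "nat \<Rightarrow> (nat \<Rightarrow> real) \<Rightarrow> nat \<Rightarrow> real" where
 "cc n J j = (if j < n then J j - J (Suc j) else J n)"

lemma tele: "d \<le> n \<Longrightarrow> (\<Sum>j\<in>{d..n}. cc n J j) = J d"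
proof (induction d rule: inc_induct)
  case base then show ?case by (simp add: cc_def)
next
  case (step i) then show ?case by (simp add: sum.atLeast_Suc_atMost cc_def)
qed

lemma J_decomp:
  assumes "N \<ge> 2" "v \<in> {1..N^n}" "w \<in> {1..N^n}" "v < w"
  shows "J (hdist N v w) = (\<Sum>j\<in>{1..n}. cc n J j * of_bool (same N j v w))"
proof -
  let ?d = "hdist N v w"
  note h = hdist_props[OF assms]
  have "(\<Sum>j\<in>{1..n}. cc n J j * of_bool (same N j v w)) = (\<Sum>j\<in>{1..n}. if j \<in> {?d..n} then cc n J j else 0)"
    by (rule sum.cong) (auto simp: h(3))
  also have "\<dots> = sum (cc n J) ({1..n} \<inter> {?d..n})" by (rule sum.inter_restrict[symmetric]) simp
  also have "{1..n} \<inter> {?d..n} = {?d..n}" using h(1) by auto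
  finally show ?thesis using tele[OF h(2)] by simp
qed

lemma lt_div: "(B::nat) > 0 \<Longrightarrow> x < (x div B + 1) * B"
  by (simp add: dividend_less_div_times)

lemma count_pairs:
  fixes B M k :: nat
  assumes "B > 0" "B dvd M" "k \<le> M"
  shows "{(v,w). (v \<in> {1..M} \<and> w \<in> {1..M} \<and> v < w) \<and> (v-1) div B = (w-1) div B \<and> v \<le> k \<and> k < w}
         = {k div B * B + 1 .. k} \<times> {k+1 .. (k div B + 1) * B}" (is "?A = ?B")
proof (intro set_eqI iffI)
  fix x assume "x \<in> ?A"
  then obtain v w where x: "x = (v,w)" and v: "v \<in> {1..M}" "w \<in> {1..M}" "v < w"
    and s: "(v-1) div B = (w-1) div B" and c: "v \<le> k" "k < w" by auto
  have "v - 1 \<le> k" "k \<le> w - 1" using c by auto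
  hence "(v-1) div B \<le> k div B" "k div B \<le> (w-1) div B" by (auto intro: div_le_mono)
  then have p: "(v-1) div B = k div B" "(w-1) div B = k div B" using s by auto
  have "k div B * B \<le> v - 1" using div_mult_mod_eq[of "v-1" B] p(1) by (metis le_add1)
  hence 1: "k div B * B + 1 \<le> v" using v by auto
  have "w - 1 < ((w-1) div B + 1) * B"
    using lt_div[OF assms(1)] by blast
  hence 2: "w \<le> (k div B + 1) * B" using p by simp
  show "x \<in> ?B" using x 1 2 c by auto
next
  fix x assume "x \<in> ?B"
  then obtain v w where x: "x = (v,w)" and v: "k div B * B + 1 \<le> v" "v \<le> k"
    and w: "k + 1 \<le> w" "w \<le> (k div B + 1) * B" by auto
  obtain t where t: "M = B * t" using assms(2) by auto
  have a: "k div B * B < M" using v assms(3) by linarith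
  hence "k div B < t" using t assms(1) by (metis mult.commute mult_less_cancel1)
  hence "k div B + 1 \<le> t" by simp
  hence "(k div B + 1) * B \<le> B * t" by (metis mult.commute mult_le_mono1)
  hence wM: "w \<le> M" using w t by simp
  have kb: "k < B * Suc (k div B)"
    using lt_div[OF assms(1), of k] by (simp add: mult.commute)
  have v2: "B * (k div B) < v" using v(1) by (simp add: mult.commute)
  have w2: "w \<le> B * Suc (k div B)" using w(2) by (simp add: mult.commute)
  have kd: "B * (k div B) \<le> k" by (simp add: mult.commute)
  have "(v-1) div B = k div B"
    by (rule div_nat_eqI) ((use v v2 kb kd in linarith)+)
  moreover have "(w-1) div B = k div B"
    by (rule div_nat_eqI) ((use w w2 kb kd in linarith)+)
  ultimately show "x \<in> ?A" using x v w wM assms by auto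
qed


lemma card_count:
  fixes B M k :: nat
  assumes "B > 0" "B dvd M" "k \<le> M"
  shows "card {(v,w). (v \<in> {1..M} \<and> w \<in> {1..M} \<and> v < w) \<and> (v-1) div B = (w-1) div B \<and> v \<le> k \<and> k < w}
         = k mod B * (B - k mod B)"
proof -
  have kd: "k div B * B \<le> k" by simp
  have kb: "k < (k div B + 1) * B" using lt_div[OF assms(1)] by blast
  have "card {k div B * B + 1 .. k} = k mod B"
    using kd minus_div_mult_eq_mod[of k B] by simp
  moreover have "card {k+1 .. (k div B + 1) * B} = B - k mod B"
  proof -
    have "card {k+1 .. (k div B + 1) * B} = (k div B + 1) * B - k" by simp
    also have "\<dots> = B - k mod B" by (simp add: modulo_nat_def)
    finally show ?thesis .
  qed
  ultimately show ?thesis unfolding count_pairs[OF assms] card_cartesian_product by simp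
qed

definition PS :: "nat \<Rightarrow> nat \<Rightarrow> (nat \<times> nat) set" where
  "PS N n = {(v,w). v \<in> {1..N^n} \<and> w \<in> {1..N^n} \<and> v < w}"

lemma PS_finite: "finite (PS N n)"
  by (rule finite_subset[of _ "{1..N^n} \<times> {1..N^n}"]) (auto simp: PS_def)

definition EE :: "nat \<Rightarrow> nat \<Rightarrow> (nat \<Rightarrow> real) \<Rightarrow> nat \<Rightarrow> real" where
  "EE N n J k = (\<Sum>p\<in>PS N n. J (hdist N (fst p) (snd p)) * of_bool (fst p \<le> k \<and> k < snd p))"

definition ff :: "nat \<Rightarrow> nat \<Rightarrow> real" where
  "ff B k = real (k mod B) * (real B - real (k mod B))"

lemma E_formula:
  assumes "N \<ge> 2" "k \<le> N^n"
  shows "EE N n J k = (\<Sum>j\<in>{1..n}. cc n J j * ff (N^j) k)"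
proof -
  have "EE N n J k = (\<Sum>p\<in>PS N n. \<Sum>j\<in>{1..n}. cc n J j *
         of_bool (same N j (fst p) (snd p) \<and> fst p \<le> k \<and> k < snd p))"
    unfolding EE_def
  proof (rule sum.cong[OF refl])
    fix p assume "p \<in> PS N n"
    then obtain v w where p: "p = (v,w)" "v \<in> {1..N^n}" "w \<in> {1..N^n}" "v < w"
      by (auto simp: PS_def)
    show "J (hdist N (fst p) (snd p)) * of_bool (fst p \<le> k \<and> k < snd p) =
       (\<Sum>j\<in>{1..n}. cc n J j * of_bool (same N j (fst p) (snd p) \<and> fst p \<le> k \<and> k < snd p))"
      using p by (simp add: J_decomp[OF assms(1) p(2-4)] sum_distrib_right of_bool_conj mult.assoc)
  qed
  also have "\<dots> = (\<Sum>j\<in>{1..n}. cc n J j * (\<Sum>p\<in>PS N n.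
         of_bool (same N j (fst p) (snd p) \<and> fst p \<le> k \<and> k < snd p)))"
    by (simp add: sum.swap[of _ "PS N n"] sum_distrib_left del: sum_of_bool_eq)
  also have "\<dots> = (\<Sum>j\<in>{1..n}. cc n J j * ff (N^j) k)"
  proof (rule sum.cong[OF refl])
    fix j assume j: "j \<in> {1..n}"
    have B: "N^j > 0" "N^j dvd N^n" using assms j by (auto intro: le_imp_power_dvd)
    have "PS N n \<inter> {p. same N j (fst p) (snd p) \<and> fst p \<le> k \<and> k < snd p} =
      {(v,w). (v \<in> {1..N^n} \<and> w \<in> {1..N^n} \<and> v < w) \<and> (v-1) div N^j = (w-1) div N^j \<and> v \<le> k \<and> k < w}"
      by (auto simp: PS_def same_def)
        moreover have "real (N ^ j - k mod N ^ j) = real N ^ j - real (k mod N ^ j)"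
      using less_imp_le[OF mod_less_divisor[OF B(1)], of k] by (simp add: of_nat_diff)
    ultimately show "cc n J j * (\<Sum>p\<in>PS N n. of_bool (same N j (fst p) (snd p) \<and> fst p \<le> k \<and> k < snd p))
        = cc n J j * ff (N^j) k"
      using card_count[OF B assms(2)] PS_finite[of N n]
      by (simp add: ff_def)
  qed
  finally show ?thesis .
qed


lemma pair_sum:
  "(\<Sum>(v,w)\<in>PS N n. J (hdist N v w) * gamma k v * gamma k w)
   = (\<Sum>p\<in>PS N n. J (hdist N (fst p) (snd p))) - 2 * EE N n J k"
proof -
  have "(\<Sum>(v,w)\<in>PS N n. J (hdist N v w) * gamma k v * gamma k w)
     = (\<Sum>p\<in>PS N n. J (hdist N (fst p) (snd p)) - 2 * (J (hdist N (fst p) (snd p)) * of_bool (fst p \<le> k \<and> k < snd p)))"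
    unfolding case_prod_unfold
    by (rule sum.cong[OF refl]) (auto simp: PS_def gamma_def)
  also have "\<dots> = (\<Sum>p\<in>PS N n. J (hdist N (fst p) (snd p))) - 2 * EE N n J k"
    unfolding EE_def by (simp add: sum_subtractf sum_distrib_left)
  finally show ?thesis .
qed

lemma field_sum:
  assumes "k \<le> M"
  shows "(\<Sum>v\<in>{1..M}. gamma k v) = 2 * real k - real M"
proof -
  have "(\<Sum>v\<in>{1..M}. gamma k v) = (\<Sum>v\<in>{1..M}. 2 * of_bool (v \<le> k) - 1)"
    by (rule sum.cong) (auto simp: gamma_def)
  also have "\<dots> = 2 * real (card ({1..M} \<inter> {v. v \<le> k})) - real M"
    by (simp add: sum_subtractf sum_distrib_left[symmetric])
  also have "{1..M} \<inter> {v. v \<le> k} = {1..k}" using assms by auto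
  finally show ?thesis by simp
qed

lemma ham_eq:
  assumes "k \<le> N^n"
  shows "hamiltonian N n J h (gamma k) = -1/2 * (\<Sum>p\<in>PS N n. J (hdist N (fst p) (snd p)))
     + EE N n J k - h * real k + h * real (N^n) / 2"
  unfolding hamiltonian_def PS_def[symmetric] pair_sum field_sum[OF assms]
  by (simp add: algebra_simps)

lemma modsym: fixes B L K :: nat
  assumes "B>0" "B dvd L" "K \<le> L" "K mod B \<noteq> 0" shows "(L - K) mod B = B - K mod B"
proof -
  have "((L - K) mod B + K mod B) mod B = (L - K + K) mod B" by (rule mod_add_eq)
  also have "\<dots> = 0" using assms by simp
  finally obtain c where c: "(L - K) mod B + K mod B = B * c" by blast
  have "(L - K) mod B < B" "K mod B < B" using assms(1) by auto
  hence "c < 2" using c by (metis add_less_mono mult_2_right mult.commute nat_mult_less_cancel_disj not_less)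
  moreover have "c \<noteq> 0" proof assume "c = 0" with c have "K mod B = 0" by simp with assms(4) show False by simp qed
  ultimately have "c = 1" by simp
  thus ?thesis using c by simp
qed

lemma ff_sym:
  fixes B L K :: nat
  assumes "B > 0" "B dvd L" "K \<le> L"
  shows "ff B (L - K) = ff B K"
proof (cases "K mod B = 0")
  case True
  then have "B dvd K" by auto
  then have "B dvd L - K" using assms(2) by (rule dvd_diff_nat[rotated])
  then show ?thesis using True by (simp add: ff_def)
next
  case False
  have le: "K mod B \<le> B" using assms(1) by (simp add: less_imp_le)
  show ?thesis using modsym[OF assms False] le by (simp add: ff_def of_nat_diff)
qed

lemma ff_big:
  fixes B K :: nat
  assumes "K \<le> B"
  shows "ff B K = real K * (real B - real K)"
proof (cases "K < B")
  case True then show ?thesis by (simp add: ff_def)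
next
  case False then have "K = B" using assms by simp
  then show ?thesis by (simp add: ff_def)
qed

lemma gsum:
  fixes x Jt s :: real
  assumes "x > 1"
  shows "(\<Sum>j\<in>{m+1..<m+1+u}. (Jt/x^j - Jt/x^(Suc j)) * (x^j - s * x^m))
     = Jt*((1-1/x)*real u - s/x + s/x^(u+1))"
proof (induction u)
  case 0 then show ?case using assms by simp
next
  case (Suc u)
  have t: "(Jt/x^(m+1+u) - Jt/x^(Suc (m+1+u))) * (x^(m+1+u) - s * x^m) = Jt*(1-1/x)*(1 - s/x^(u+1))"
    using assms by (simp add: power_add field_simps)
  have "(\<Sum>j\<in>{m+1..<m+1+Suc u}. (Jt/x^j - Jt/x^(Suc j)) * (x^j - s * x^m))
      = (\<Sum>j\<in>{m+1..<m+1+u}. (Jt/x^j - Jt/x^(Suc j)) * (x^j - s * x^m))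
        + (Jt/x^(m+1+u) - Jt/x^(Suc (m+1+u))) * (x^(m+1+u) - s * x^m)"
    by simp
  also have "\<dots> = Jt*((1-1/x)*real (Suc u) - s/x + s/x^(Suc u + 1))"
    unfolding Suc.IH t using assms by (simp add: field_simps)
  finally show ?case .
qed

lemma hsum:
  fixes N n m s :: nat and Jt :: real and J :: "nat \<Rightarrow> real"
  assumes "N \<ge> 2" "\<And>i. 1 \<le> i \<Longrightarrow> i \<le> n \<Longrightarrow> J i = Jt / real N ^ i" "m < n"
  shows "(\<Sum>j\<in>{m+1..n}. cc n J j * (real N ^ j - real s * real N ^ m)) = hfield N n Jt m s"
proof -
  define u where "u = n - m - 1"
  have n: "n = m + 1 + u" using assms(3) by (simp add: u_def)
  have x: "real N > 1" using assms(1) by simp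
  have "{m+1..n} = insert n {m+1..<m+1+u}" using n by auto
  hence A: "(\<Sum>j\<in>{m+1..n}. cc n J j * (real N ^ j - real s * real N ^ m))
     = cc n J n * (real N ^ n - real s * real N ^ m)
      + (\<Sum>j\<in>{m+1..<m+1+u}. cc n J j * (real N ^ j - real s * real N ^ m))"
    using n by simp
  have B: "(\<Sum>j\<in>{m+1..<m+1+u}. cc n J j * (real N ^ j - real s * real N ^ m))
    = (\<Sum>j\<in>{m+1..<m+1+u}. (Jt/real N^j - Jt/real N^(Suc j)) * (real N^j - real s * real N^m))"
    by (rule sum.cong) (auto simp: cc_def assms(2) n)
  have C: "cc n J n * (real N ^ n - real s * real N ^ m) = Jt * (1 - real s / real N^(u+1))"
  proof -
    have "cc n J n = Jt / real N ^ n" using assms by (simp add: cc_def n)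
    moreover have "real N ^ n = real N ^ m * real N ^ (u+1)" by (simp add: n power_add)
    ultimately show ?thesis using x by (simp add: field_simps)
  qed
  show ?thesis unfolding A B C gsum[OF x] hfield_def using x
    by (simp add: n field_simps)
qed


theorem lemma4p4:
  fixes N n m s K :: nat and Jt :: real and J :: "nat \<Rightarrow> real"
  assumes "N \<ge> 2" and "n \<ge> 1" and "Jt > 0"
    and "\<And>i. 1 \<le> i \<Longrightarrow> i \<le> n \<Longrightarrow> J i = Jt / real N ^ i"
    and "m \<le> n - 1" and "1 \<le> s" and "s \<le> N"
    and "K \<le> s * N ^ m"
  shows "hamiltonian N n J (hfield N n Jt m s) (gamma K)
       = hamiltonian N n J (hfield N n Jt m s) (gamma (s * N ^ m - K))"
proof -
  define L where "L = s * N ^ m"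
  define h where "h = hfield N n Jt m s"
  have mn: "m < n" using assms(2,5) by simp
  have KL: "K \<le> L" using assms(8) by (simp add: L_def)
  have Lm: "L \<le> N ^ (m+1)" unfolding L_def using assms(7) by (simp add: mult.commute)
  have big: "\<And>j. m + 1 \<le> j \<Longrightarrow> L \<le> N ^ j"
    using Lm assms(1) by (meson le_trans power_increasing_iff one_le_numeral less_le_trans
      one_less_numeral_iff semiring_norm(76) power_increasing order.trans
      less_imp_le Suc_1 Suc_le_lessD)
  have LM: "L \<le> N ^ n" using big[of n] mn by simp
  have E1: "EE N n J K - EE N n J (L - K)
     = (\<Sum>j\<in>{1..n}. cc n J j * (ff (N^j) K - ff (N^j) (L - K)))"
    using E_formula[OF assms(1), of K n J] E_formula[OF assms(1), of "L - K" n J] KL LM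
    by (simp add: sum_subtractf right_diff_distrib)
  also have "\<dots> = (\<Sum>j\<in>{m+1..n}. cc n J j * (ff (N^j) K - ff (N^j) (L - K)))"
  proof (rule sum.mono_neutral_right)
    show "\<forall>j\<in>{1..n} - {m+1..n}. cc n J j * (ff (N^j) K - ff (N^j) (L - K)) = 0"
    proof
      fix j assume j: "j \<in> {1..n} - {m+1..n}"
      then have "j \<le> m" by auto
      then have "N^j dvd L" unfolding L_def by (simp add: le_imp_power_dvd)
      moreover have "N^j > 0" using assms(1) by simp
      ultimately show "cc n J j * (ff (N^j) K - ff (N^j) (L - K)) = 0"
        using ff_sym[OF _ _ KL] by simp
    qed
  qed auto
  also have "\<dots> = (\<Sum>j\<in>{m+1..n}. (2 * real K - real L) * (cc n J j * (real N ^ j - real s * real N ^ m)))"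
  proof (rule sum.cong[OF refl])
    fix j assume j: "j \<in> {m+1..n}"
    have b: "L \<le> N^j" using big j by auto
    have f1: "ff (N^j) K = real K * (real N ^ j - real K)" using ff_big[of K "N^j"] b KL by simp
    have f2: "ff (N^j) (L - K) = real (L - K) * (real N ^ j - real (L - K))"
      using ff_big[of "L - K" "N^j"] b by simp
    have r: "real (L - K) = real L - real K" using KL by simp
    have Lr: "real L = real s * real N ^ m" by (simp add: L_def)
    have d: "ff (N^j) K - ff (N^j) (L - K) = (2 * real K - real L) * (real N ^ j - real L)"
      unfolding f1 f2 r by (simp add: algebra_simps)
    show "cc n J j * (ff (N^j) K - ff (N^j) (L - K)) =
      (2 * real K - real L) * (cc n J j * (real N ^ j - real s * real N ^ m))"
      unfolding d Lr[symmetric] by (simp add: algebra_simps)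
  qed
  also have "\<dots> = (2 * real K - real L) * h"
    unfolding sum_distrib_left[symmetric] h_def using hsum[OF assms(1) assms(4) mn] by simp
  finally have E: "EE N n J K - EE N n J (L - K) = (2 * real K - real L) * h" .
  have "L - K \<le> N ^ n" using LM by simp
  then show ?thesis
    unfolding L_def[symmetric] h_def[symmetric] ham_eq[OF order.trans[OF KL LM]] ham_eq[OF \<open>L - K \<le> N ^ n\<close>]
    using E KL by (simp add: algebra_simps of_nat_diff)
qed

end
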